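(* With the notation below, the map $$\mathcal N^r_{x_0}\longrightarrow N_0\times N_2\times\cdots\times N_r,\qquad j^r_{x_0}g\longmapsto (g_{x_0},g^2_{x_0},\dots,g^r_{x_0})$$ is a diffeomorphism (for $r\le 1$ the target is just $N_0$).
   Context: $X$ is a smooth $n$-manifold, $x_0\in X$, $p+q=n$, $(z_1,\dots,z_n)$ a fixed coordinate system centred at $x_0$, $r\ge0$. $\mathcal N^r_{x_0}$ is the submanifold of the manifold $J^r_{x_0}M$ of $r$-jets at $x_0$ of semi-Riemannian metrics of signature $(p,q)$ consisting of those jets whose coefficients $g_{ij}$ in the coordinates $z$ satisfy the Gauss-lemma equations $\sum_j g_{ij}z_j=\sum_j g_{ij}(x_0)z_j$ up to order $r$. For $k\ge1$, $N_k$ is the vector space of $(k+2)$-covariant tensors $T$ on $T_{x_0}X$ that are symmetric in the first two indices and in the last $k$ indices, and whose cyclic sum over the last $k+1$ indices vanishes: $T_{ijk_1\dots k_k}+T_{ik_kjk_1\dots k_{k-1}}+\cdots+T_{ik_1\dots k_kj}=0$; $N_0$ is the open set of symmetric bilinear forms of signature $(p,q)$ on $T_{x_0}X$. For $j^r_{x_0}g\in\mathcal N^r_{x_0}$ and $2\le s\le r$, $g^s_{x_0}$ is the tensor $\sum \frac{\partial^s g_{ij}}{\partial z_{k_1}\cdots\partial z_{k_s}}(x_0)\,dz_i\otimes dz_j\otimes dz_{k_1}\otimes\cdots\otimes dz_{k_s}$ (the $s$-th normal tensor of $g$ at $x_0$), and $g_{x_0}$ is the value of the metric at $x_0$. *)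

theory Defs
  imports "HOL-Analysis.Analysis" "HOL-Library.Multiset"
begin

text \<open>For a finite index set I, the coordinate space R^I is realised as the
functions that vanish outside I, with the (product = Euclidean) topology.\<close>

definition coord_space :: "'a set \<Rightarrow> ('a \<Rightarrow> real) set" where
  "coord_space I = {x. \<forall>a. a \<notin> I \<longrightarrow> x a = 0}"

definition pd :: "'a \<Rightarrow> (('a \<Rightarrow> real) \<Rightarrow> real) \<Rightarrow> ('a \<Rightarrow> real) \<Rightarrow> real" where
  "pd a F x = deriv (\<lambda>t. F (x(a := x a + t))) 0"

fun ipd :: "'a list \<Rightarrow> (('a \<Rightarrow> real) \<Rightarrow> real) \<Rightarrow> ('a \<Rightarrow> real) \<Rightarrow> real" where
  "ipd [] F = F"
| "ipd (a # as) F = pd a (ipd as F)"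

definition smooth_fun :: "'a set \<Rightarrow> ('a \<Rightarrow> real) set \<Rightarrow> (('a \<Rightarrow> real) \<Rightarrow> real) \<Rightarrow> bool" where
  "smooth_fun I U F \<longleftrightarrow>
     (\<forall>as\<in>lists I. continuous_on U (ipd as F) \<and>
        (\<forall>x\<in>U. \<forall>a\<in>I. (\<lambda>t. ipd as F (x(a := x a + t))) differentiable (at 0)))"

definition smooth_map :: "'a set \<Rightarrow> ('a \<Rightarrow> real) set \<Rightarrow> (('a \<Rightarrow> real) \<Rightarrow> ('b \<Rightarrow> real)) \<Rightarrow> bool" where
  "smooth_map I U F \<longleftrightarrow> (\<forall>b. smooth_fun I U (\<lambda>x. F x b))"

text \<open>Diffeomorphism between arbitrary subsets S of R^I and T of R^J (Milnor):
a bijection which, as well as its inverse, extends locally (here: to an open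
neighbourhood) to a smooth map.\<close>

definition diffeo :: "'a set \<Rightarrow> 'b set \<Rightarrow> (('a \<Rightarrow> real) \<Rightarrow> ('b \<Rightarrow> real))
                      \<Rightarrow> ('a \<Rightarrow> real) set \<Rightarrow> ('b \<Rightarrow> real) set \<Rightarrow> bool" where
  "diffeo I J f S T \<longleftrightarrow>
     finite I \<and> finite J \<and> S \<subseteq> coord_space I \<and> T \<subseteq> coord_space J \<and>
     bij_betw f S T \<and>
     (\<exists>U F. openin (top_of_set (coord_space I)) U \<and> S \<subseteq> U \<and>
            smooth_map I U F \<and> (\<forall>x\<in>S. F x = f x)) \<and>
     (\<exists>W G. openin (top_of_set (coord_space J)) W \<and> T \<subseteq> W \<and>
            smooth_map J W G \<and> (\<forall>y\<in>T. G y = inv_into S f y))"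

text \<open>A tensor T_(i j k_1 ... k_s) on T_(x0)X (in the basis dz) is a function of
(i, j, [k_1,...,k_s]). An r-jet of a metric at x0 is recorded by its coefficients
a(i,j,K) = d^|K| g_ij / dz_K (x0), |K| <= r.\<close>

type_synonym tensor = "nat \<times> nat \<times> nat list \<Rightarrow> real"

definition jet_index :: "nat \<Rightarrow> nat \<Rightarrow> (nat \<times> nat \<times> nat list) set" where
  "jet_index n r = {(i, j, K). i < n \<and> j < n \<and> set K \<subseteq> {..<n} \<and> length K \<le> r}"

definition bil :: "nat \<Rightarrow> (nat \<Rightarrow> nat \<Rightarrow> real) \<Rightarrow> (nat \<Rightarrow> real) \<Rightarrow> (nat \<Rightarrow> real) \<Rightarrow> real" where
  "bil n B u v = (\<Sum>i<n. \<Sum>j<n. B i j * u i * v j)"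

definition has_signature :: "nat \<Rightarrow> nat \<Rightarrow> (nat \<Rightarrow> nat \<Rightarrow> real) \<Rightarrow> bool" where
  "has_signature p q B \<longleftrightarrow>
     (\<forall>i<p+q. \<forall>j<p+q. B i j = B j i) \<and>
     (\<exists>e :: nat \<Rightarrow> nat \<Rightarrow> real.
        (\<forall>k<p+q. \<forall>l. p+q \<le> l \<longrightarrow> e k l = 0) \<and>
        (\<forall>k<p+q. \<forall>l<p+q. bil (p+q) B (e k) (e l) =
                     (if k \<noteq> l then 0 else if k < p then 1 else -1)))"

definition metric_jets :: "nat \<Rightarrow> nat \<Rightarrow> nat \<Rightarrow> tensor set" where
  "metric_jets p q r = {a.
     (\<forall>x. x \<notin> jet_index (p+q) r \<longrightarrow> a x = 0) \<and>
     (\<forall>i j K. a (i, j, K) = a (j, i, K)) \<and>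
     (\<forall>i j K K'. mset K = mset K' \<longrightarrow> a (i, j, K) = a (i, j, K')) \<and>
     has_signature p q (\<lambda>i j. a (i, j, []))}"

definition taylor :: "nat \<Rightarrow> nat \<Rightarrow> tensor \<Rightarrow> nat \<Rightarrow> nat \<Rightarrow> (nat \<Rightarrow> real) \<Rightarrow> real" where
  "taylor n r a i j z =
     (\<Sum>s\<le>r. (1 / fact s) *
        (\<Sum>K\<in>{K. length K = s \<and> set K \<subseteq> {..<n}}. a (i, j, K) * prod_list (map z K)))"

text \<open>The submanifold N^r_(x0): jets satisfying the Gauss lemma equations
sum_j g_ij z_j = sum_j g_ij(x0) z_j to the order determined by the r-jet,
i.e. identically for the order-r Taylor polynomial of g.\<close>

definition gauss_jets :: "nat \<Rightarrow> nat \<Rightarrow> nat \<Rightarrow> tensor set" where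
  "gauss_jets p q r = {a \<in> metric_jets p q r.
     \<forall>i<p+q. \<forall>z :: nat \<Rightarrow> real.
       (\<Sum>j<p+q. taylor (p+q) r a i j z * z j) = (\<Sum>j<p+q. a (i, j, []) * z j)}"

definition N0 :: "nat \<Rightarrow> nat \<Rightarrow> tensor set" where
  "N0 p q = {T. (\<forall>i j K. (K \<noteq> [] \<or> \<not> i < p+q \<or> \<not> j < p+q) \<longrightarrow> T (i, j, K) = 0) \<and>
               has_signature p q (\<lambda>i j. T (i, j, []))}"

definition Nk :: "nat \<Rightarrow> nat \<Rightarrow> tensor set" where
  "Nk n k = {T.
     (\<forall>i j K. \<not> (i < n \<and> j < n \<and> set K \<subseteq> {..<n} \<and> length K = k) \<longrightarrow> T (i, j, K) = 0) \<and>
     (\<forall>i j K. T (i, j, K) = T (j, i, K)) \<and>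
     (\<forall>i j K K'. mset K = mset K' \<longrightarrow> T (i, j, K) = T (i, j, K')) \<and>
     (\<forall>i j K. length K = k \<longrightarrow>
        (\<Sum>m\<le>k. let L = rotate m (j # K) in T (i, hd L, tl L)) = 0)}"

text \<open>The product N_0 x N_2 x ... x N_r, encoded as Phi(s, i, j, K) = (s-th factor)(i,j,K);
the slots s = 1 and s > r are identically zero.\<close>

definition prodN :: "nat \<Rightarrow> nat \<Rightarrow> nat \<Rightarrow> (nat \<times> nat \<times> nat \<times> nat list \<Rightarrow> real) set" where
  "prodN p q r = {Phi.
     (\<lambda>x. Phi (0, x)) \<in> N0 p q \<and>
     (\<forall>s. 2 \<le> s \<and> s \<le> r \<longrightarrow> (\<lambda>x. Phi (s, x)) \<in> Nk (p+q) s) \<and>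
     (\<forall>s x. (s = 1 \<or> r < s) \<longrightarrow> Phi (s, x) = 0)}"

definition prod_index :: "nat \<Rightarrow> nat \<Rightarrow> (nat \<times> nat \<times> nat \<times> nat list) set" where
  "prod_index n r = {(s, i, j, K). s \<le> r \<and> i < n \<and> j < n \<and> set K \<subseteq> {..<n} \<and> length K = s}"

definition normal_tensor :: "tensor \<Rightarrow> nat \<Rightarrow> tensor" where
  "normal_tensor a s = (\<lambda>(i, j, K). if length K = s then a (i, j, K) else 0)"

definition normal_map :: "nat \<Rightarrow> tensor \<Rightarrow> (nat \<times> nat \<times> nat \<times> nat list \<Rightarrow> real)" where
  "normal_map r a = (\<lambda>(s, x). if s = 0 \<or> (2 \<le> s \<and> s \<le> r) then normal_tensor a s x else 0)"

end

theory Submission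
  imports Defs "HOL-Combinatorics.Multiset_Permutations"
begin


definition LS :: "nat \<Rightarrow> nat \<Rightarrow> nat list set" where
  "LS n d = {L. set L \<subseteq> {..<n} \<and> length L = d}"
definition MS :: "nat \<Rightarrow> nat \<Rightarrow> nat multiset set" where
  "MS n d = {M. set_mset M \<subseteq> {..<n} \<and> size M = d}"
definition zm :: "(nat \<Rightarrow> real) \<Rightarrow> nat multiset \<Rightarrow> real" where
  "zm z M = prod_mset (image_mset z M)"

lemma finite_LS: "finite (LS n d)"
  unfolding LS_def using finite_lists_length_eq[of "{..<n}" d] by simp

lemma MS_eq: "MS n d = mset ` LS n d"
  unfolding MS_def LS_def
proof safe
  fix M assume "set_mset M \<subseteq> {..<n}" 
  obtain L where "mset L = M" using ex_mset by blast
  thus "M \<in> mset ` {L. set L \<subseteq> {..<n} \<and> length L = size M}"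
    using \<open>set_mset M \<subseteq> {..<n}\<close> by force
qed auto

lemma finite_MS: "finite (MS n d)"
  unfolding MS_eq using finite_LS by simp

lemma zm_add[simp]: "zm z (add_mset y M) = z y * zm z M"
  by (simp add: zm_def)

lemma zm_deriv:
  "((\<lambda>t. zm (z(x := z x + t)) M) has_real_derivative (real (count M x) * zm z (M - {#x#}))) (at 0)"
proof (induction M)
  case empty
  then show ?case by (simp add: zm_def)
next
  case (add y M)
  have f: "((\<lambda>t. (z(x := z x + t)) y) has_real_derivative (if y = x then 1 else 0)) (at 0)"
  proof (cases "y = x")
    case True
    have e: "(\<lambda>t. (z(x := z x + t)) y) = (\<lambda>t. z x + t)" using True by simp
    show ?thesis unfolding e using True by (auto intro!: derivative_eq_intros)
  next
    case False
    have e: "(\<lambda>t. (z(x := z x + t)) y) = (\<lambda>t. z y)" using False by simp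
    show ?thesis unfolding e using False by (auto intro!: derivative_eq_intros)
  qed
  have eq: "z(x := z x + 0) = z" by simp
  have D: "((\<lambda>t. (z(x := z x + t)) y * zm (z(x := z x + t)) M) has_real_derivative
     ((if y = x then 1 else 0) * zm z M + z y * (real (count M x) * zm z (M - {#x#})))) (at 0)"
    using DERIV_mult'[OF f add.IH] unfolding eq by (subst add.commute)
  have E: "(if y = x then 1 else 0) * zm z M + z y * (real (count M x) * zm z (M - {#x#}))
         = real (count (add_mset y M) x) * zm z (add_mset y M - {#x#})"
  proof (cases "y = x")
    case True
    show ?thesis
    proof (cases "x \<in># M")
      case True
      then have "M = add_mset x (M - {#x#})" by simp
      then have "z x * zm z (M - {#x#}) = zm z M" by (metis zm_add)
      then show ?thesis using \<open>y = x\<close> by (simp add: algebra_simps)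
    next
      case False
      then have "count M x = 0" by (simp add: not_in_iff)
      then show ?thesis using \<open>y = x\<close> by simp
    qed
  next
    case False
    then have "add_mset y M - {#x#} = add_mset y (M - {#x#})" by (metis diff_union_swap)
    then show ?thesis using False by simp
  qed
  have "((\<lambda>t. (z(x := z x + t)) y * zm (z(x := z x + t)) M) has_real_derivative
     (real (count (add_mset y M) x) * zm z (add_mset y M - {#x#}))) (at 0)"
    using D unfolding E .
  then show ?case by (simp only: zm_add)
qed

lemma MS_Suc_image:
  assumes "x < n"
  shows "{M \<in> MS n (Suc d). x \<in># M} = (\<lambda>M. add_mset x M) ` MS n d"
  unfolding MS_def
proof safe
  fix M assume "set_mset M \<subseteq> {..<n}" "size M = Suc d" "x \<in># M"
  then show "M \<in> add_mset x ` {M. set_mset M \<subseteq> {..<n} \<and> size M = d}"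
    by (intro image_eqI[of _ _ "M - {#x#}"]) (auto simp: size_Diff_submset dest: in_diffD)
qed (use assms in auto)

lemma poly_zero_coeffs:
  assumes "\<forall>z. (\<Sum>M\<in>MS n d. S M * zm z M) = 0" "M \<in> MS n d"
  shows "S M = 0"
  using assms
proof (induction d arbitrary: S M)
  case 0
  have "MS n 0 = {{#}}" unfolding MS_def by auto
  with 0 show ?case by (simp add: zm_def)
next
  case (Suc d)
  have "M \<noteq> {#}" using Suc.prems(2) by (auto simp: MS_def)
  then obtain x where x: "x \<in># M" by blast
  have xn: "x < n" using x Suc.prems(2) by (auto simp: MS_def)
  define S' where "S' M'' = S (add_mset x M'') * real (count M'' x + 1)" for M''
  have "\<forall>z. (\<Sum>M\<in>MS n d. S' M * zm z M) = 0"
  proof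
    fix z
    have "((\<lambda>t. \<Sum>M\<in>MS n (Suc d). S M * zm (z(x := z x + t)) M) has_real_derivative
        (\<Sum>M\<in>MS n (Suc d). S M * (real (count M x) * zm z (M - {#x#})))) (at 0)"
      by (intro DERIV_sum DERIV_cmult zm_deriv)
    moreover have "((\<lambda>t. \<Sum>M\<in>MS n (Suc d). S M * zm (z(x := z x + t)) M) has_real_derivative 0) (at 0)"
      using Suc.prems(1) by simp
    ultimately have 1: "(\<Sum>M\<in>MS n (Suc d). S M * (real (count M x) * zm z (M - {#x#}))) = 0"
      using DERIV_unique by blast
    have "(\<Sum>M\<in>MS n (Suc d). S M * (real (count M x) * zm z (M - {#x#})))
        = (\<Sum>M\<in>{M \<in> MS n (Suc d). x \<in># M}. S M * (real (count M x) * zm z (M - {#x#})))"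
      by (intro sum.mono_neutral_right finite_MS) (auto simp: not_in_iff)
    also have "\<dots> = (\<Sum>M\<in>MS n d. S' M * zm z M)"
      unfolding MS_Suc_image[OF xn]
      by (subst sum.reindex) (auto simp: inj_on_def S'_def mult.assoc)
    finally show "(\<Sum>M\<in>MS n d. S' M * zm z M) = 0" using 1 by simp
  qed
  moreover have "M - {#x#} \<in> MS n d" using Suc.prems(2) x
    by (auto simp: MS_def size_Diff_submset dest: in_diffD)
  ultimately have "S' (M - {#x#}) = 0" by (rule Suc.IH)
  moreover have "count M x \<noteq> 0" using x by simp
  ultimately show ?case by (simp add: S'_def)
qed



lemma mset_rotate1': "mset (rotate1 xs) = mset xs"
  by (cases xs) auto

lemma mset_rotate': "mset (rotate n xs) = mset xs"
  by (induction n) (auto simp: rotate_Suc mset_rotate1')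

lemma mset_tl_eq: "xs \<noteq> [] \<Longrightarrow> mset (tl xs) = mset xs - {#hd xs#}"
  by (cases xs) auto

lemma rot_sum_eq:
  fixes T :: tensor
  assumes symK: "\<And>j K K'. mset K = mset K' \<Longrightarrow> T (i, j, K) = T (i, j, K')"
  shows "(\<Sum>m\<le>length K. let L = rotate m (j # K) in T (i, hd L, tl L))
       = sum_list (map (\<lambda>x. T (i, x, remove1 x (j # K))) (j # K))"
proof -
  let ?L = "j # K"
  have "(\<Sum>m\<le>length K. let L = rotate m ?L in T (i, hd L, tl L))
      = (\<Sum>m=0..<length ?L. T (i, ?L ! m, remove1 (?L ! m) ?L))"
  proof (rule sum.cong)
    show "{..length K} = {0..<length ?L}" by auto
  next
    fix m assume m: "m \<in> {0..<length ?L}"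
    have ne: "rotate m ?L \<noteq> []" by simp
    have h: "hd (rotate m ?L) = ?L ! m"
      using hd_rotate_conv_nth[of ?L m] m by simp
    have "mset (tl (rotate m ?L)) = mset (rotate m ?L) - {#hd (rotate m ?L)#}" by (rule mset_tl_eq[OF ne])
    also have "\<dots> = mset ?L - {#?L ! m#}" by (simp only: mset_rotate' h)
    also have "\<dots> = mset (remove1 (?L ! m) ?L)" by (simp only: mset_remove1)
    finally have mt: "mset (tl (rotate m ?L)) = mset (remove1 (?L ! m) ?L)" .
    show "(let L = rotate m ?L in T (i, hd L, tl L)) = T (i, ?L ! m, remove1 (?L ! m) ?L)"
      unfolding Let_def h using symK[OF mt] by simp
  qed
  also have "\<dots> = (\<Sum>m=0..<length ?L. (map (\<lambda>x. T (i, x, remove1 x ?L)) ?L) ! m)"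
    by (rule sum.cong[OF refl], subst nth_map, simp_all)
  also have "\<dots> = sum_list (map (\<lambda>x. T (i, x, remove1 x ?L)) ?L)"
    using sum_list_sum_nth[of "map (\<lambda>x. T (i, x, remove1 x ?L)) ?L"] by (simp only: length_map)
  finally show ?thesis .
qed

lemma sum_list_count_real:
  "sum_list (map (f :: nat \<Rightarrow> real) xs) = (\<Sum>x\<in>set xs. real (count_list xs x) * f x)"
proof (induction xs)
  case Nil
  then show ?case by simp
next
  case (Cons y xs)
  have A: "(\<Sum>x\<in>insert y (set xs). real (count_list xs x) * f x) = (\<Sum>x\<in>set xs. real (count_list xs x) * f x)"
  proof (cases "y \<in> set xs")
    case True
    then show ?thesis by (simp add: insert_absorb)
  next
    case False
    then have "count_list xs y = 0" by (simp add: count_list_0_iff)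
    then show ?thesis using False by simp
  qed
  have "(\<Sum>x\<in>set (y # xs). real (count_list (y # xs) x) * f x)
      = (\<Sum>x\<in>insert y (set xs). real (count_list xs x) * f x + (if x = y then f x else 0))"
    by (intro sum.cong refl) (auto simp: algebra_simps)
  also have "\<dots> = (\<Sum>x\<in>insert y (set xs). real (count_list xs x) * f x) + f y"
    by (simp add: sum.distrib)
  finally show ?case using A Cons.IH by simp
qed

definition Ssum :: "tensor \<Rightarrow> nat \<Rightarrow> nat multiset \<Rightarrow> real" where
  "Ssum T i M = (\<Sum>L\<in>permutations_of_multiset M. T (i, hd L, tl L))"

lemma Ssum_eq:
  fixes T :: tensor
  assumes symK: "\<And>j K K'. mset K = mset K' \<Longrightarrow> T (i, j, K) = T (i, j, K')"
    and L: "mset L = M" "L \<noteq> []"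
  shows "Ssum T i M = real (card (permutations_of_multiset M)) / real (length L)
            * sum_list (map (\<lambda>x. T (i, x, remove1 x L)) L)"
proof -
  have Mne: "M \<noteq> {#}" using L by auto
  have "Ssum T i M = (\<Sum>L'\<in>(\<Union>x\<in>set_mset M. (#) x ` permutations_of_multiset (M - {#x#})). T (i, hd L', tl L'))"
    unfolding Ssum_def permutations_of_multiset_nonempty[OF Mne] ..
  also have "\<dots> = (\<Sum>x\<in>set_mset M. \<Sum>L'\<in>(#) x ` permutations_of_multiset (M - {#x#}). T (i, hd L', tl L'))"
    by (rule sum.UNION_disjoint) auto
  also have "\<dots> = (\<Sum>x\<in>set_mset M. \<Sum>K\<in>permutations_of_multiset (M - {#x#}). T (i, x, K))"
  proof (rule sum.cong[OF refl])
    fix x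
    have inj: "inj_on ((#) x) (permutations_of_multiset (M - {#x#}))" by (simp add: inj_on_def)
    show "(\<Sum>L'\<in>(#) x ` permutations_of_multiset (M - {#x#}). T (i, hd L', tl L')) =
          (\<Sum>K\<in>permutations_of_multiset (M - {#x#}). T (i, x, K))"
      by (simp add: sum.reindex[OF inj])
  qed
  also have "\<dots> = (\<Sum>x\<in>set_mset M. real (card (permutations_of_multiset (M - {#x#}))) * T (i, x, remove1 x L))"
  proof (intro sum.cong refl)
    fix x assume x: "x \<in> set_mset M"
    have "\<And>K. K \<in> permutations_of_multiset (M - {#x#}) \<Longrightarrow> T (i, x, K) = T (i, x, remove1 x L)"
      using L by (intro symK) (auto simp: permutations_of_multiset_def mset_remove1)
    then show "(\<Sum>K\<in>permutations_of_multiset (M - {#x#}). T (i, x, K)) =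
           real (card (permutations_of_multiset (M - {#x#}))) * T (i, x, remove1 x L)"
      by simp
  qed
  also have "\<dots> = (\<Sum>x\<in>set_mset M. real (card (permutations_of_multiset M)) / real (length L)
                       * (real (count M x) * T (i, x, remove1 x L)))"
  proof (intro sum.cong refl)
    fix x assume x: "x \<in> set_mset M"
    have "size M = length L" using L by auto
    then show "real (card (permutations_of_multiset (M - {#x#}))) * T (i, x, remove1 x L) =
      real (card (permutations_of_multiset M)) / real (length L) * (real (count M x) * T (i, x, remove1 x L))"
      using real_card_permutations_of_multiset_remove[of x M] x by simp
  qed
  also have "\<dots> = real (card (permutations_of_multiset M)) / real (length L) *
                 (\<Sum>x\<in>set L. real (count_list L x) * T (i, x, remove1 x L))"
    unfolding L(1)[symmetric] by (simp add: sum_distrib_left count_mset)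
  also have "(\<Sum>x\<in>set L. real (count_list L x) * T (i, x, remove1 x L)) =
             sum_list (map (\<lambda>x. T (i, x, remove1 x L)) L)"
    by (rule sum_list_count_real[symmetric])
  finally show ?thesis .
qed

lemma card_perm_pos: "card (permutations_of_multiset M) > 0"
proof -
  obtain L where "mset L = M" using ex_mset by blast
  then have "permutations_of_multiset M \<noteq> {}" by (auto simp: permutations_of_multiset_def)
  then show ?thesis by (simp add: card_gt_0_iff)
qed



definition Qs :: "nat \<Rightarrow> tensor \<Rightarrow> nat \<Rightarrow> nat \<Rightarrow> (nat \<Rightarrow> real) \<Rightarrow> real" where
  "Qs n a i s z = (\<Sum>j<n. (\<Sum>K\<in>LS n s. a (i, j, K) * prod_list (map z K)) * z j)"

lemma LS_Suc: "LS n (Suc s) = (\<lambda>(j, K). j # K) ` ({..<n} \<times> LS n s)"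
  unfolding LS_def
proof safe
  fix L assume "set L \<subseteq> {..<n}" "length L = Suc s"
  then show "L \<in> (\<lambda>(j, K). j # K) ` ({..<n} \<times> {L. set L \<subseteq> {..<n} \<and> length L = s})"
    by (cases L) force+
qed auto

lemma Qs_list: "Qs n a i s z = (\<Sum>L\<in>LS n (Suc s). a (i, hd L, tl L) * prod_list (map z L))"
proof -
  have "Qs n a i s z = (\<Sum>j<n. \<Sum>K\<in>LS n s. a (i, j, K) * prod_list (map z (j # K)))"
    unfolding Qs_def by (simp only: sum_distrib_right) (simp add: mult_ac)
  also have "\<dots> = (\<Sum>(j, K)\<in>{..<n} \<times> LS n s. a (i, j, K) * prod_list (map z (j # K)))"
    by (rule sum.cartesian_product)
  also have "\<dots> = (\<Sum>L\<in>LS n (Suc s). a (i, hd L, tl L) * prod_list (map z L))"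
    unfolding LS_Suc by (subst sum.reindex) (auto simp: inj_on_def intro!: sum.cong)
  finally show ?thesis .
qed

lemma zm_mset: "zm z (mset L) = prod_list (map z L)"
  by (simp add: zm_def prod_mset_prod_list flip: mset_map)

lemma regroup:
  "(\<Sum>L\<in>LS n d. c L * prod_list (map z L)) = (\<Sum>M\<in>MS n d. (\<Sum>L\<in>permutations_of_multiset M. c L) * zm z M)"
proof -
  have "(\<Sum>L\<in>LS n d. c L * prod_list (map z L)) = (\<Sum>M\<in>MS n d. \<Sum>L\<in>{L \<in> LS n d. mset L = M}. c L * prod_list (map z L))"
    by (rule sum.group[symmetric]) (auto simp: finite_LS finite_MS MS_eq)
  also have "\<dots> = (\<Sum>M\<in>MS n d. (\<Sum>L\<in>permutations_of_multiset M. c L) * zm z M)"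
  proof (intro sum.cong refl)
    fix M assume M: "M \<in> MS n d"
    have "{L \<in> LS n d. mset L = M} = permutations_of_multiset M"
      using M by (auto simp: LS_def MS_def permutations_of_multiset_def)
    then show "(\<Sum>L\<in>{L \<in> LS n d. mset L = M}. c L * prod_list (map z L)) =
         (\<Sum>L\<in>permutations_of_multiset M. c L) * zm z M"
      by (simp add: sum_distrib_right permutations_of_multiset_def flip: zm_mset)
  qed
  finally show ?thesis .
qed

lemma Qs_mset: "Qs n a i s z = (\<Sum>M\<in>MS n (Suc s). Ssum a i M * zm z M)"
  unfolding Qs_list regroup Ssum_def ..

definition rotsum :: "tensor \<Rightarrow> nat \<Rightarrow> nat \<Rightarrow> nat list \<Rightarrow> real" where
  "rotsum a i j K = (\<Sum>m\<le>length K. let L = rotate m (j # K) in a (i, hd L, tl L))"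

lemma Qs_zero_iff:
  fixes a :: tensor
  assumes symK: "\<And>j K K'. mset K = mset K' \<Longrightarrow> a (i, j, K) = a (i, j, K')"
  shows "(\<forall>z. Qs n a i s z = 0) \<longleftrightarrow> (\<forall>j K. j < n \<longrightarrow> K \<in> LS n s \<longrightarrow> rotsum a i j K = 0)"
proof
  assume H: "\<forall>z. Qs n a i s z = 0"
  show "\<forall>j K. j < n \<longrightarrow> K \<in> LS n s \<longrightarrow> rotsum a i j K = 0"
  proof (intro allI impI)
    fix j K assume j: "j < n" and K: "K \<in> LS n s"
    have "mset (j # K) \<in> MS n (Suc s)" using j K by (auto simp: LS_def MS_def)
    then have "Ssum a i (mset (j # K)) = 0"
      using H by (intro poly_zero_coeffs[where n=n and d="Suc s" and S="Ssum a i"]) (simp add: Qs_mset)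
    then have "real (card (permutations_of_multiset (mset (j # K)))) / real (length (j # K))
            * sum_list (map (\<lambda>x. a (i, x, remove1 x (j # K))) (j # K)) = 0"
      using Ssum_eq[where T=a and i=i, OF symK, of "j # K" "mset (j # K)"] by simp
    moreover have "real (card (permutations_of_multiset (mset (j # K)))) / real (length (j # K)) \<noteq> 0"
      using card_perm_pos[of "mset (j # K)"] by simp
    ultimately have "sum_list (map (\<lambda>x. a (i, x, remove1 x (j # K))) (j # K)) = 0" by simp
    then show "rotsum a i j K = 0"
      unfolding rotsum_def using rot_sum_eq[where T=a and i=i, OF symK] by simp
  qed
next
  assume H: "\<forall>j K. j < n \<longrightarrow> K \<in> LS n s \<longrightarrow> rotsum a i j K = 0"
  show "\<forall>z. Qs n a i s z = 0"
  proof
    fix z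
    have "\<And>M. M \<in> MS n (Suc s) \<Longrightarrow> Ssum a i M = 0"
    proof -
      fix M assume M: "M \<in> MS n (Suc s)"
      obtain L where L: "mset L = M" using ex_mset by blast
      then have "L \<noteq> []" using M by (auto simp: MS_def)
      then obtain j K where jK: "L = j # K" by (cases L) auto
      have "j < n" "K \<in> LS n s" using M L jK by (auto simp: MS_def LS_def)
      then have "rotsum a i j K = 0" using H by blast
      then have "sum_list (map (\<lambda>x. a (i, x, remove1 x L)) L) = 0"
        unfolding rotsum_def jK using rot_sum_eq[where T=a and i=i, OF symK] by simp
      then show "Ssum a i M = 0" using Ssum_eq[where T=a and i=i, OF symK L] jK by simp
    qed
    then show "Qs n a i s z = 0" unfolding Qs_mset by simp
  qed
qed

lemma prod_list_scale: "prod_list (map (\<lambda>k. t * z k) K) = t ^ length K * prod_list (map z K)" for t :: real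
proof (induction K)
  case Nil
  then show ?case by simp
next
  case (Cons y K)
  have "prod_list (map (\<lambda>k. t * z k) (y # K)) = (t * z y) * (t ^ length K * prod_list (map z K))"
    using Cons by simp
  also have "\<dots> = t ^ length (y # K) * prod_list (map z (y # K))"
    by (simp add: mult_ac)
  finally show ?case .
qed

lemma Qs_scale: "Qs n a i s (\<lambda>k. t * z k) = t ^ Suc s * Qs n a i s z"
proof -
  have h: "(\<Sum>K\<in>LS n s. a (i, j, K) * (t ^ s * prod_list (map z K))) =
      t ^ s * (\<Sum>K\<in>LS n s. a (i, j, K) * prod_list (map z K))" for j
    by (simp add: sum_distrib_left mult_ac)
  have "Qs n a i s (\<lambda>k. t * z k) = (\<Sum>j<n. (\<Sum>K\<in>LS n s. a (i, j, K) * (t ^ s * prod_list (map z K))) * (t * z j))"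
    unfolding Qs_def prod_list_scale
    by (intro sum.cong refl arg_cong2[where f = "(*)"]) (auto simp: LS_def)
  also have "\<dots> = (\<Sum>j<n. t ^ Suc s * ((\<Sum>K\<in>LS n s. a (i, j, K) * prod_list (map z K)) * z j))"
    by (intro sum.cong refl) (unfold h, simp only: power_Suc mult_ac)
  also have "\<dots> = t ^ Suc s * Qs n a i s z"
    unfolding Qs_def by (rule sum_distrib_left[symmetric])
  finally show ?thesis .
qed

definition Gdiff :: "nat \<Rightarrow> nat \<Rightarrow> tensor \<Rightarrow> nat \<Rightarrow> (nat \<Rightarrow> real) \<Rightarrow> real" where
  "Gdiff n r a i z = (\<Sum>j<n. taylor n r a i j z * z j) - (\<Sum>j<n. a (i, j, []) * z j)"

lemma taylor_split:
  "taylor n r a i j z = a (i, j, []) + (\<Sum>s\<in>{1..r}. (1 / fact s) * (\<Sum>K\<in>LS n s. a (i, j, K) * prod_list (map z K)))"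
proof -
  have e: "{K. length K = s \<and> set K \<subseteq> {..<n}} = LS n s" for s by (auto simp: LS_def)
  have z: "LS n 0 = {[]}" by (auto simp: LS_def)
  have "{..r} = insert 0 {1..r}" by auto
  then show ?thesis unfolding taylor_def e by (simp add: z)
qed

lemma Gdiff_eq: "Gdiff n r a i z = (\<Sum>s\<in>{1..r}. (1 / fact s) * Qs n a i s z)"
proof -
  define X where "X j s = (\<Sum>K\<in>LS n s. a (i, j, K) * prod_list (map z K))" for j s
  have "Gdiff n r a i z = (\<Sum>j<n. (\<Sum>s\<in>{1..r}. (1 / fact s) * X j s) * z j)"
    unfolding Gdiff_def taylor_split X_def by (simp add: distrib_right sum.distrib)
  also have "\<dots> = (\<Sum>j<n. \<Sum>s\<in>{1..r}. (1 / fact s) * (X j s * z j))"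
    by (simp add: sum_distrib_right mult.assoc)
  also have "\<dots> = (\<Sum>s\<in>{1..r}. \<Sum>j<n. (1 / fact s) * (X j s * z j))"
    by (rule sum.swap)
  also have "\<dots> = (\<Sum>s\<in>{1..r}. (1 / fact s) * Qs n a i s z)"
    unfolding Qs_def X_def[symmetric] by (simp add: sum_distrib_left)
  finally show ?thesis .
qed

lemma Gdiff_zero_iff:
  "(\<forall>z. Gdiff n r a i z = 0) \<longleftrightarrow> (\<forall>s. 1 \<le> s \<and> s \<le> r \<longrightarrow> (\<forall>z. Qs n a i s z = 0))"
proof
  assume H: "\<forall>z. Gdiff n r a i z = 0"
  show "\<forall>s. 1 \<le> s \<and> s \<le> r \<longrightarrow> (\<forall>z. Qs n a i s z = 0)"
  proof (intro allI impI)
    fix s z assume s: "1 \<le> s \<and> s \<le> r"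
    define c where "c k = (if 2 \<le> k then (1 / fact (k - 1)) * Qs n a i (k - 1) z else 0)" for k
    have "\<And>t. (\<Sum>k\<le>Suc r. c k * t ^ k) = 0"
    proof -
      fix t :: real
      have "(\<Sum>k\<le>Suc r. c k * t ^ k) = (\<Sum>k\<in>{2..Suc r}. c k * t ^ k)"
        by (rule sum.mono_neutral_right) (auto simp: c_def)
      also have "\<dots> = (\<Sum>s\<in>{1..r}. c (Suc s) * t ^ Suc s)"
        by (rule sum.reindex_bij_witness[of _ Suc "\<lambda>k. k - 1"]) auto
      also have "\<dots> = (\<Sum>s\<in>{1..r}. (1 / fact s) * Qs n a i s (\<lambda>k. t * z k))"
        by (intro sum.cong refl) (auto simp: c_def Qs_scale)
      also have "\<dots> = Gdiff n r a i (\<lambda>k. t * z k)" by (simp add: Gdiff_eq)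
      finally show "(\<Sum>k\<le>Suc r. c k * t ^ k) = 0" using H by simp
    qed
    then have "c (Suc s) = 0" by (rule zero_polynom_imp_zero_coeffs) (use s in auto)
    then show "Qs n a i s z = 0" using s by (simp add: c_def)
  qed
next
  assume "\<forall>s. 1 \<le> s \<and> s \<le> r \<longrightarrow> (\<forall>z. Qs n a i s z = 0)"
  then show "\<forall>z. Gdiff n r a i z = 0" by (simp add: Gdiff_eq)
qed



lemma pd_coord: "pd a (\<lambda>x. x c) = (\<lambda>x. if a = c then 1 else 0)"
proof
  fix x :: "'a \<Rightarrow> real"
  show "pd a (\<lambda>x. x c) x = (if a = c then 1 else 0)"
  proof (cases "a = c")
    case True
    have e: "(\<lambda>t. (x(a := x a + t)) c) = (\<lambda>t. x a + t)" using True by auto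
    have "((\<lambda>t. x a + t) has_real_derivative 1) (at 0)" by (auto intro!: derivative_eq_intros)
    then show ?thesis unfolding pd_def e using True by (simp add: DERIV_imp_deriv)
  next
    case False
    have e: "(\<lambda>t. (x(a := x a + t)) c) = (\<lambda>t. x c)" using False by auto
    have "((\<lambda>t. x c) has_real_derivative 0) (at 0)" by (auto intro!: derivative_eq_intros)
    then show ?thesis unfolding pd_def e using False by (simp add: DERIV_imp_deriv)
  qed
qed

lemma pd_const: "pd a (\<lambda>x. k) = (\<lambda>x. 0)"
proof
  fix x :: "'a \<Rightarrow> real"
  have "((\<lambda>t. k) has_real_derivative 0) (at 0)" by (auto intro!: derivative_eq_intros)
  then show "pd a (\<lambda>x. k) x = 0" unfolding pd_def by (simp add: DERIV_imp_deriv)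
qed

lemma ipd_const: "\<exists>k'. ipd as (\<lambda>x::'a \<Rightarrow> real. k) = (\<lambda>x. k')"
proof (induction as)
  case Nil
  then show ?case by auto
next
  case (Cons b as)
  then obtain k' where "ipd as (\<lambda>x::'a \<Rightarrow> real. k) = (\<lambda>x. k')" by blast
  then have "ipd (b # as) (\<lambda>x::'a \<Rightarrow> real. k) = (\<lambda>x. 0)" by (simp add: pd_const)
  then show ?case by blast
qed

lemma ipd_coord: "ipd as (\<lambda>x::'a \<Rightarrow> real. x c) = (\<lambda>x. x c) \<or> (\<exists>k'. ipd as (\<lambda>x::'a \<Rightarrow> real. x c) = (\<lambda>x. k'))"
proof (induction as)
  case Nil
  then show ?case by auto
next
  case (Cons b as)
  then show ?case
  proof
    assume "ipd as (\<lambda>x::'a \<Rightarrow> real. x c) = (\<lambda>x. x c)"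
    then show ?thesis by (auto simp: pd_coord)
  next
    assume "\<exists>k'. ipd as (\<lambda>x::'a \<Rightarrow> real. x c) = (\<lambda>x. k')"
    then obtain k' where "ipd as (\<lambda>x::'a \<Rightarrow> real. x c) = (\<lambda>x. k')" by blast
    then show ?thesis by (auto simp: pd_const)
  qed
qed

lemma smooth_fun_const: "smooth_fun I U (\<lambda>x::'a \<Rightarrow> real. k)"
  unfolding smooth_fun_def
proof (rule ballI, rule conjI)
  fix as assume "as \<in> lists I"
  obtain k' where e: "ipd as (\<lambda>x::'a \<Rightarrow> real. k) = (\<lambda>x. k')" using ipd_const by blast
  show "continuous_on U (ipd as (\<lambda>x. k))" unfolding e by (rule continuous_on_const)
  show "\<forall>x\<in>U. \<forall>a\<in>I. (\<lambda>t. ipd as (\<lambda>x. k) (x(a := x a + t))) differentiable at 0"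
    unfolding e by simp
qed

lemma smooth_fun_coord: "smooth_fun I U (\<lambda>x::'a \<Rightarrow> real. x c)"
  unfolding smooth_fun_def
proof (rule ballI, rule conjI)
  fix as assume "as \<in> lists I"
  from ipd_coord[of as c]
  show "continuous_on U (ipd as (\<lambda>x. x c))"
  proof
    assume e: "ipd as (\<lambda>x::'a \<Rightarrow> real. x c) = (\<lambda>x. x c)"
    show ?thesis unfolding e
      by (rule continuous_on_subset[OF continuous_on_product_coordinates]) simp
  next
    assume "\<exists>k'. ipd as (\<lambda>x::'a \<Rightarrow> real. x c) = (\<lambda>x. k')"
    then obtain k' where e: "ipd as (\<lambda>x::'a \<Rightarrow> real. x c) = (\<lambda>x. k')" by blast
    show ?thesis unfolding e by (rule continuous_on_const)
  qed
  from ipd_coord[of as c]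
  show "\<forall>x\<in>U. \<forall>a\<in>I. (\<lambda>t. ipd as (\<lambda>x. x c) (x(a := x a + t))) differentiable at 0"
  proof
    assume e: "ipd as (\<lambda>x::'a \<Rightarrow> real. x c) = (\<lambda>x. x c)"
    show ?thesis unfolding e
    proof (intro ballI)
      fix x :: "'a \<Rightarrow> real" and a
      show "(\<lambda>t. (x(a := x a + t)) c) differentiable at 0"
      proof (cases "a = c")
        case True
        have e2: "(\<lambda>t. (x(a := x a + t)) c) = (\<lambda>t. x a + t)" using True by auto
        show ?thesis unfolding e2 by (auto intro!: derivative_intros)
      next
        case False
        have e2: "(\<lambda>t. (x(a := x a + t)) c) = (\<lambda>t. x c)" using False by auto
        show ?thesis unfolding e2 by simp
      qed
    qed
  next
    assume "\<exists>k'. ipd as (\<lambda>x::'a \<Rightarrow> real. x c) = (\<lambda>x. k')"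
    then obtain k' where e: "ipd as (\<lambda>x::'a \<Rightarrow> real. x c) = (\<lambda>x. k')" by blast
    show ?thesis unfolding e by simp
  qed
qed

lemma smooth_map_coordwise:
  assumes "\<And>b. (\<exists>c. (\<lambda>x. F x b) = (\<lambda>x. x c)) \<or> (\<lambda>x. F x b) = (\<lambda>x. 0)"
  shows "smooth_map I U F"
  unfolding smooth_map_def
proof
  fix b
  from assms[of b] show "smooth_fun I U (\<lambda>x. F x b)"
  proof
    assume "\<exists>c. (\<lambda>x. F x b) = (\<lambda>x. x c)"
    then obtain c where e: "(\<lambda>x. F x b) = (\<lambda>x. x c)" by blast
    show ?thesis unfolding e by (rule smooth_fun_coord)
  next
    assume e: "(\<lambda>x. F x b) = (\<lambda>x. 0)"
    show ?thesis unfolding e by (rule smooth_fun_const)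
  qed
qed



lemma gauss_char:
  fixes a :: tensor
  assumes symK: "\<And>i j K K'. mset K = mset K' \<Longrightarrow> a (i, j, K) = a (i, j, K')"
  shows "(\<forall>i<n. \<forall>z :: nat \<Rightarrow> real. (\<Sum>j<n. taylor n r a i j z * z j) = (\<Sum>j<n. a (i, j, []) * z j))
     \<longleftrightarrow> (\<forall>i<n. \<forall>s. 1 \<le> s \<and> s \<le> r \<longrightarrow> (\<forall>j K. j < n \<longrightarrow> K \<in> LS n s \<longrightarrow> rotsum a i j K = 0))"
proof -
  have A: "(\<forall>z :: nat \<Rightarrow> real. (\<Sum>j<n. taylor n r a i j z * z j) = (\<Sum>j<n. a (i, j, []) * z j))
            \<longleftrightarrow> (\<forall>z. Gdiff n r a i z = 0)" for i
    by (simp add: Gdiff_def)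
  have B: "(\<forall>z. Gdiff n r a i z = 0) \<longleftrightarrow>
      (\<forall>s. 1 \<le> s \<and> s \<le> r \<longrightarrow> (\<forall>j K. j < n \<longrightarrow> K \<in> LS n s \<longrightarrow> rotsum a i j K = 0))" for i
  proof -
    have "\<And>s. (\<forall>z. Qs n a i s z = 0) \<longleftrightarrow> (\<forall>j K. j < n \<longrightarrow> K \<in> LS n s \<longrightarrow> rotsum a i j K = 0)"
      by (rule Qs_zero_iff) (rule symK)
    then show ?thesis unfolding Gdiff_zero_iff by simp
  qed
  show ?thesis using A B by simp
qed

lemma rotsum_s1: "rotsum a i j [k] = a (i, j, [k]) + a (i, k, [j])"
proof -
  have "{..length [k]} = {0, Suc 0}" by auto
  then show ?thesis by (simp add: rotsum_def)
qed

lemma first_zero: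
  fixes a :: tensor
  assumes sym: "\<And>i j K. a (i, j, K) = a (j, i, K)"
    and H: "\<And>i j k. i < n \<Longrightarrow> j < n \<Longrightarrow> k < n \<Longrightarrow> a (i, j, [k]) + a (i, k, [j]) = 0"
    and "i < n" "j < n" "k < n"
  shows "a (i, j, [k]) = 0"
proof -
  have 1: "a (i, j, [k]) + a (i, k, [j]) = 0" using H assms by blast
  have 2: "a (k, i, [j]) + a (k, j, [i]) = 0" using H assms by blast
  have 3: "a (j, k, [i]) + a (j, i, [k]) = 0" using H assms by blast
  have 4: "a (i, k, [j]) = a (k, i, [j])" by (rule sym)
  have 5: "a (k, j, [i]) = a (j, k, [i])" by (rule sym)
  have 6: "a (j, i, [k]) = a (i, j, [k])" by (rule sym)
  show ?thesis using 1 2 3 4 5 6 by linarith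
qed

lemma rotsum_out:
  fixes T :: tensor
  assumes Z: "\<And>i j K. \<not> (i < n \<and> j < n \<and> set K \<subseteq> {..<n}) \<Longrightarrow> T (i, j, K) = 0"
    and out: "\<not> (i < n \<and> j < n \<and> set K \<subseteq> {..<n})"
  shows "rotsum T i j K = 0"
  unfolding rotsum_def
proof (rule sum.neutral, rule ballI)
  fix m
  let ?L = "rotate m (j # K)"
  have ne: "?L \<noteq> []" by simp
  have sL: "set ?L = set (j # K)" by simp
  have "set ?L = insert (hd ?L) (set (tl ?L))" using ne by (cases ?L) auto
  then have eq: "set (j # K) = insert (hd ?L) (set (tl ?L))" using sL by simp
  have "\<not> (i < n \<and> hd ?L < n \<and> set (tl ?L) \<subseteq> {..<n})"
  proof
    assume c: "i < n \<and> hd ?L < n \<and> set (tl ?L) \<subseteq> {..<n}"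
    then have "set (j # K) \<subseteq> {..<n}" unfolding eq by auto
    then show False using out c by simp
  qed
  then show "(let L = ?L in T (i, hd L, tl L)) = 0" using Z by (simp add: Let_def)
qed

lemma rotsum_eq_on:
  fixes T T' :: tensor
  assumes "\<And>h t. h \<in> set (j # K) \<Longrightarrow> set t \<subseteq> set (j # K) \<Longrightarrow> length t = length K \<Longrightarrow> T (i, h, t) = T' (i, h, t)"
  shows "rotsum T i j K = rotsum T' i j K"
  unfolding rotsum_def
proof (rule sum.cong[OF refl])
  fix m
  let ?L = "rotate m (j # K)"
  have ne: "?L \<noteq> []" by simp
  have sL: "set ?L = set (j # K)" by simp
  have "set ?L = insert (hd ?L) (set (tl ?L))" using ne by (cases ?L) auto
  then have "hd ?L \<in> set (j # K)" "set (tl ?L) \<subseteq> set (j # K)" using sL by auto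
  moreover have "length (tl ?L) = length K" by simp
  ultimately show "(let L = ?L in T (i, hd L, tl L)) = (let L = ?L in T' (i, hd L, tl L))"
    using assms by (simp add: Let_def)
qed

definition Ginv :: "nat \<Rightarrow> nat \<Rightarrow> (nat \<times> nat \<times> nat \<times> nat list \<Rightarrow> real) \<Rightarrow> tensor" where
  "Ginv n r Phi = (\<lambda>(i, j, K). if (i, j, K) \<in> jet_index n r \<and> length K \<noteq> 1 then Phi (length K, i, j, K) else 0)"

lemma Ginv_app: "Ginv n r Phi (i, j, K) = (if (i, j, K) \<in> jet_index n r \<and> length K \<noteq> 1 then Phi (length K, i, j, K) else 0)"
  by (simp add: Ginv_def)

lemma normal_map_app: "normal_map r a (s, i, j, K) =
   (if (s = 0 \<or> (2 \<le> s \<and> s \<le> r)) \<and> length K = s then a (i, j, K) else 0)"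
  by (simp add: normal_map_def normal_tensor_def)

lemma normal_tensor_app: "normal_tensor a s (i, j, K) = (if length K = s then a (i, j, K) else 0)"
  by (simp add: normal_tensor_def)

lemma jet_index_iff: "(i, j, K) \<in> jet_index n r \<longleftrightarrow> i < n \<and> j < n \<and> set K \<subseteq> {..<n} \<and> length K \<le> r"
  by (simp add: jet_index_def)

lemma prod_index_iff: "(s, i, j, K) \<in> prod_index n r \<longleftrightarrow> s \<le> r \<and> i < n \<and> j < n \<and> set K \<subseteq> {..<n} \<and> length K = s"
  by (simp add: prod_index_def)

lemma finite_jet_index: "finite (jet_index n r)"
proof (rule finite_subset)
  show "jet_index n r \<subseteq> {..<n} \<times> {..<n} \<times> {K. set K \<subseteq> {..<n} \<and> length K \<le> r}"
    by (auto simp: jet_index_def)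
  show "finite ({..<n} \<times> {..<n} \<times> {K. set K \<subseteq> {..<n} \<and> length K \<le> r})"
    using finite_lists_length_le[of "{..<n}" r] by simp
qed

lemma finite_prod_index: "finite (prod_index n r)"
proof (rule finite_subset)
  show "prod_index n r \<subseteq> {..r} \<times> {..<n} \<times> {..<n} \<times> {K. set K \<subseteq> {..<n} \<and> length K \<le> r}"
    by (auto simp: prod_index_def)
  show "finite ({..r} \<times> {..<n} \<times> {..<n} \<times> {K. set K \<subseteq> {..<n} \<and> length K \<le> r})"
    using finite_lists_length_le[of "{..<n}" r] by simp
qed



lemma NkI:
  fixes T :: tensor
  assumes "\<And>i j K. \<not> (i < n \<and> j < n \<and> set K \<subseteq> {..<n} \<and> length K = k) \<Longrightarrow> T (i, j, K) = 0"
    and "\<And>i j K. T (i, j, K) = T (j, i, K)"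
    and "\<And>i j K K'. mset K = mset K' \<Longrightarrow> T (i, j, K) = T (i, j, K')"
    and R: "\<And>i j K. length K = k \<Longrightarrow> rotsum T i j K = 0"
  shows "T \<in> Nk n k"
  unfolding Nk_def mem_Collect_eq
proof (intro conjI)
  show "\<forall>i j K. length K = k \<longrightarrow> (\<Sum>m\<le>k. let L = rotate m (j # K) in T (i, hd L, tl L)) = 0"
  proof (intro allI impI)
    fix i j :: nat and K :: "nat list" assume l: "length K = k"
    show "(\<Sum>m\<le>k. let L = rotate m (j # K) in T (i, hd L, tl L)) = 0"
      using R[OF l, of i j] l unfolding rotsum_def by simp
  qed
qed (use assms in blast)+

lemma NkD:
  fixes T :: tensor
  assumes "T \<in> Nk n k"
  shows NkD_zero: "\<And>i j K. \<not> (i < n \<and> j < n \<and> set K \<subseteq> {..<n} \<and> length K = k) \<Longrightarrow> T (i, j, K) = 0"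
    and NkD_sym: "\<And>i j K. T (i, j, K) = T (j, i, K)"
    and NkD_msym: "\<And>i j K K'. mset K = mset K' \<Longrightarrow> T (i, j, K) = T (i, j, K')"
    and NkD_rot: "\<And>i j K. length K = k \<Longrightarrow> rotsum T i j K = 0"
proof -
  have A: "\<forall>i j K. \<not> (i < n \<and> j < n \<and> set K \<subseteq> {..<n} \<and> length K = k) \<longrightarrow> T (i, j, K) = 0"
    and B: "\<forall>i j K. T (i, j, K) = T (j, i, K)"
    and C: "\<forall>i j K K'. mset K = mset K' \<longrightarrow> T (i, j, K) = T (i, j, K')"
    and D: "\<forall>i j K. length K = k \<longrightarrow> (\<Sum>m\<le>k. let L = rotate m (j # K) in T (i, hd L, tl L)) = 0"
    using assms unfolding Nk_def mem_Collect_eq by blast+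
  show "\<And>i j K. \<not> (i < n \<and> j < n \<and> set K \<subseteq> {..<n} \<and> length K = k) \<Longrightarrow> T (i, j, K) = 0"
    using A by blast
  show "\<And>i j K. T (i, j, K) = T (j, i, K)" using B by blast
  show "\<And>i j K K'. mset K = mset K' \<Longrightarrow> T (i, j, K) = T (i, j, K')" using C by blast
  show "\<And>i j K. length K = k \<Longrightarrow> rotsum T i j K = 0"
  proof -
    fix i j :: nat and K :: "nat list" assume l: "length K = k"
    then show "rotsum T i j K = 0" using D unfolding rotsum_def by simp
  qed
qed

lemma gauss_jetsD:
  assumes "a \<in> gauss_jets p q r"
  shows gj_zero: "\<And>x. x \<notin> jet_index (p+q) r \<Longrightarrow> a x = 0"
    and gj_sym: "\<And>i j K. a (i, j, K) = a (j, i, K)"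
    and gj_msym: "\<And>i j K K'. mset K = mset K' \<Longrightarrow> a (i, j, K) = a (i, j, K')"
    and gj_sig: "has_signature p q (\<lambda>i j. a (i, j, []))"
    and gj_gauss: "\<forall>i<p+q. \<forall>z :: nat \<Rightarrow> real. (\<Sum>j<p+q. taylor (p+q) r a i j z * z j) = (\<Sum>j<p+q. a (i, j, []) * z j)"
  using assms unfolding gauss_jets_def metric_jets_def by blast+

lemma gj_rot:
  assumes "a \<in> gauss_jets p q r" "i < p + q" "1 \<le> s" "s \<le> r" "j < p + q" "K \<in> LS (p+q) s"
  shows "rotsum a i j K = 0"
proof -
  have "\<forall>i<p+q. \<forall>s. 1 \<le> s \<and> s \<le> r \<longrightarrow> (\<forall>j K. j < p+q \<longrightarrow> K \<in> LS (p+q) s \<longrightarrow> rotsum a i j K = 0)"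
    using gauss_char[where a = a and n = "p+q" and r = r, OF gj_msym[OF assms(1)]] gj_gauss[OF assms(1)]
    by blast
  then show ?thesis using assms by blast
qed

lemma gj_first:
  assumes "a \<in> gauss_jets p q r"
  shows "a (i, j, [k]) = 0"
proof (cases "i < p + q \<and> j < p + q \<and> k < p + q \<and> 1 \<le> r")
  case True
  have H: "a (i', j', [k']) + a (i', k', [j']) = 0" if "i' < p + q" "j' < p + q" "k' < p + q" for i' j' k'
  proof -
    have "[k'] \<in> LS (p+q) 1" using that by (simp add: LS_def)
    then have "rotsum a i' j' [k'] = 0" using gj_rot[OF assms, of i' 1 j' "[k']"] that True by simp
    then show ?thesis by (simp add: rotsum_s1)
  qed
  show ?thesis
    by (rule first_zero[where n = "p+q"]) (use True H gj_sym[OF assms] in auto)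
next
  case False
  then have "(i, j, [k]) \<notin> jet_index (p+q) r" by (auto simp: jet_index_def)
  then show ?thesis by (rule gj_zero[OF assms])
qed

lemma f_into:
  assumes a: "a \<in> gauss_jets p q r"
  shows "normal_map r a \<in> prodN p q r"
  unfolding prodN_def mem_Collect_eq
proof (intro conjI allI impI)
  show "(\<lambda>x. normal_map r a (0, x)) \<in> N0 p q"
    unfolding N0_def mem_Collect_eq
  proof (intro conjI allI impI)
    fix i j :: nat and K :: "nat list" assume h: "K \<noteq> [] \<or> \<not> i < p + q \<or> \<not> j < p + q"
    show "normal_map r a (0, i, j, K) = 0"
    proof (cases "K = []")
      case True
      then have "(i, j, K) \<notin> jet_index (p+q) r" using h by (simp add: jet_index_def)
      then have "a (i, j, K) = 0" using gj_zero[OF a] by blast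
      then show ?thesis using True by (simp add: normal_map_app)
    next
      case False
      then show ?thesis by (simp add: normal_map_app)
    qed
  next
    have "(\<lambda>i j. normal_map r a (0, i, j, [])) = (\<lambda>i j. a (i, j, []))"
      by (simp add: normal_map_app)
    then show "has_signature p q (\<lambda>i j. normal_map r a (0, i, j, []))"
      using gj_sig[OF a] by simp
  qed
next
  fix s assume s: "2 \<le> s \<and> s \<le> r"
  let ?T = "\<lambda>x. normal_map r a (s, x)"
  have Tapp: "?T (i, j, K) = (if length K = s then a (i, j, K) else 0)" for i j K
    using s by (simp add: normal_map_app)
  have Z: "?T (i, j, K) = 0" if "\<not> (i < p+q \<and> j < p+q \<and> set K \<subseteq> {..<p+q} \<and> length K = s)" for i j K
  proof (cases "length K = s")
    case True
    then have "(i, j, K) \<notin> jet_index (p+q) r" using that s by (auto simp: jet_index_def)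
    then show ?thesis using gj_zero[OF a] Tapp by simp
  qed (simp add: Tapp)
  show "?T \<in> Nk (p+q) s"
  proof (rule NkI)
    show "\<And>i j K. \<not> (i < p+q \<and> j < p+q \<and> set K \<subseteq> {..<p+q} \<and> length K = s) \<Longrightarrow> ?T (i, j, K) = 0"
      by (rule Z)
    show "\<And>i j K. ?T (i, j, K) = ?T (j, i, K)" using gj_sym[OF a] Tapp by simp
    show "\<And>i j K K'. mset K = mset K' \<Longrightarrow> ?T (i, j, K) = ?T (i, j, K')"
    proof -
      fix i j :: nat and K K' :: "nat list" assume m: "mset K = mset K'"
      then have "length K = length K'" by (metis size_mset)
      then show "?T (i, j, K) = ?T (i, j, K')" using gj_msym[OF a m] Tapp by simp
    qed
    show "\<And>i j K. length K = s \<Longrightarrow> rotsum ?T i j K = 0"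
    proof -
      fix i j :: nat and K :: "nat list" assume l: "length K = s"
      show "rotsum ?T i j K = 0"
      proof (cases "i < p+q \<and> j < p+q \<and> set K \<subseteq> {..<p+q}")
        case True
        have "rotsum ?T i j K = rotsum a i j K"
          by (rule rotsum_eq_on) (use l Tapp in simp)
        also have "\<dots> = 0"
          using gj_rot[OF a, of i s j K] True l s by (simp add: LS_def)
        finally show ?thesis .
      next
        case False
        show ?thesis
        proof (rule rotsum_out[where n = "p+q"])
          show "\<And>i j K. \<not> (i < p+q \<and> j < p+q \<and> set K \<subseteq> {..<p+q}) \<Longrightarrow> ?T (i, j, K) = 0"
            using Z by blast
        qed (use False in simp)
      qed
    qed
  qed
next
  fix s x assume "s = 1 \<or> r < s"
  then show "normal_map r a (s, x) = 0"
    by (cases x) (auto simp: normal_map_app)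
qed



lemma prodND:
  assumes "Phi \<in> prodN p q r"
  shows pN0: "(\<lambda>x. Phi (0, x)) \<in> N0 p q"
    and pNk: "\<And>s. 2 \<le> s \<Longrightarrow> s \<le> r \<Longrightarrow> (\<lambda>x. Phi (s, x)) \<in> Nk (p+q) s"
    and pN1: "\<And>s x. s = 1 \<or> r < s \<Longrightarrow> Phi (s, x) = 0"
  using assms unfolding prodN_def by blast+

lemma N0D:
  assumes "T \<in> N0 p q"
  shows N0D_zero: "\<And>i j K. K \<noteq> [] \<or> \<not> i < p+q \<or> \<not> j < p+q \<Longrightarrow> T (i, j, K) = 0"
    and N0D_sig: "has_signature p q (\<lambda>i j. T (i, j, []))"
  using assms unfolding N0_def by blast+

lemma prodN_zero:
  assumes P: "Phi \<in> prodN p q r" and y: "(s, i, j, K) \<notin> prod_index (p+q) r"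
  shows "Phi (s, i, j, K) = 0"
proof (cases "s = 1 \<or> r < s")
  case True
  then show ?thesis by (rule pN1[OF P])
next
  case False
  show ?thesis
  proof (cases "s = 0")
    case True
    then have "K \<noteq> [] \<or> \<not> i < p+q \<or> \<not> j < p+q" using y by (auto simp: prod_index_def)
    then show ?thesis using N0D_zero[OF pN0[OF P]] True by simp
  next
    case s0: False
    then have s2: "2 \<le> s" "s \<le> r" using False by auto
    have "\<not> (i < p+q \<and> j < p+q \<and> set K \<subseteq> {..<p+q} \<and> length K = s)"
      using y s2 by (auto simp: prod_index_def)
    then show ?thesis using NkD_zero[OF pNk[OF P s2]] by simp
  qed
qed

lemma f_Ginv:
  assumes P: "Phi \<in> prodN p q r"
  shows "normal_map r (Ginv (p+q) r Phi) = Phi"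
proof
  fix y :: "nat \<times> nat \<times> nat \<times> nat list"
  obtain s i j K where y: "y = (s, i, j, K)" using prod_cases4 by blast
  show "normal_map r (Ginv (p+q) r Phi) y = Phi y"
  proof (cases "(s = 0 \<or> (2 \<le> s \<and> s \<le> r)) \<and> length K = s")
    case True
    show ?thesis
    proof (cases "i < p+q \<and> j < p+q \<and> set K \<subseteq> {..<p+q}")
      case True2: True
      have "(i, j, K) \<in> jet_index (p+q) r" "length K \<noteq> 1" using True True2 by (auto simp: jet_index_def)
      then show ?thesis unfolding y normal_map_app Ginv_app using True by simp
    next
      case False
      then have "(i, j, K) \<notin> jet_index (p+q) r" by (auto simp: jet_index_def)
      moreover have "(s, i, j, K) \<notin> prod_index (p+q) r" using False by (auto simp: prod_index_def)
      ultimately show ?thesis unfolding y normal_map_app Ginv_app using prodN_zero[OF P] by simp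
    qed
  next
    case False
    have "Phi (s, i, j, K) = 0"
    proof (cases "length K = s")
      case True
      then have "s = 1 \<or> r < s" using False by presburger
      then show ?thesis by (rule pN1[OF P])
    next
      case False
      then have "(s, i, j, K) \<notin> prod_index (p+q) r" by (auto simp: prod_index_def)
      then show ?thesis by (rule prodN_zero[OF P])
    qed
    then show ?thesis unfolding y normal_map_app by (simp only: if_not_P[OF False] if_False)
  qed
qed

lemma Ginv_into:
  assumes P: "Phi \<in> prodN p q r"
  shows "Ginv (p+q) r Phi \<in> gauss_jets p q r"
proof -
  let ?n = "p + q"
  let ?a = "Ginv ?n r Phi"
  have zero: "?a x = 0" if "x \<notin> jet_index ?n r" for x
    using that by (cases x) (simp add: Ginv_app)
  have sym: "?a (i, j, K) = ?a (j, i, K)" for i j K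
  proof (cases "(i, j, K) \<in> jet_index ?n r \<and> length K \<noteq> 1")
    case True
    then have ij: "i < ?n" "j < ?n" "length K \<le> r" "length K \<noteq> 1" by (auto simp: jet_index_def)
    have "Phi (length K, i, j, K) = Phi (length K, j, i, K)"
    proof (cases "length K = 0")
      case True
      then have "K = []" by simp
      moreover have "\<forall>i<p+q. \<forall>j<p+q. Phi (0, i, j, []) = Phi (0, j, i, [])"
        using N0D_sig[OF pN0[OF P]] unfolding has_signature_def by blast
      ultimately show ?thesis using ij by simp
    next
      case False
      then have "2 \<le> length K" using ij(4) by presburger
      then show ?thesis using NkD_sym[OF pNk[OF P]] ij by simp
    qed
    moreover have "(j, i, K) \<in> jet_index ?n r" using True by (auto simp: jet_index_def)
    ultimately show ?thesis using True by (simp add: Ginv_app)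
  next
    case False
    have h2: "\<not> ((j, i, K) \<in> jet_index ?n r \<and> length K \<noteq> 1)" using False by (auto simp: jet_index_def)
    have "?a (i, j, K) = 0" unfolding Ginv_app by (rule if_not_P[OF False])
    moreover have "?a (j, i, K) = 0" unfolding Ginv_app by (rule if_not_P[OF h2])
    ultimately show ?thesis by simp
  qed
  have msym: "?a (i, j, K) = ?a (i, j, K')" if m: "mset K = mset K'" for i j K K'
  proof -
    have l: "length K = length K'" using m by (metis size_mset)
    have st: "set K = set K'" using m by (metis set_mset_mset)
    have "Phi (length K, i, j, K) = Phi (length K, i, j, K')" if "length K \<noteq> 1" "length K \<le> r"
    proof (cases "length K = 0")
      case True
      then show ?thesis using l by simp
    next
      case False
      then have "2 \<le> length K" using that(1) by presburger
      then show ?thesis using NkD_msym[OF pNk[OF P], OF _ _ m] that by simp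
    qed
    then show ?thesis using l st by (simp add: Ginv_app jet_index_def)
  qed
  have sig_eq: "(\<lambda>i j. ?a (i, j, [])) = (\<lambda>i j. Phi (0, i, j, []))"
  proof (intro ext)
    fix i j
    show "?a (i, j, []) = Phi (0, i, j, [])"
    proof (cases "i < ?n \<and> j < ?n")
      case True
      then show ?thesis by (simp add: Ginv_app jet_index_def)
    next
      case False
      then show ?thesis using N0D_zero[OF pN0[OF P], of "[]" i j] by (auto simp: Ginv_app jet_index_def)
    qed
  qed
  have sig: "has_signature p q (\<lambda>i j. ?a (i, j, []))"
    unfolding sig_eq by (rule N0D_sig[OF pN0[OF P]])
  have rot: "\<forall>i<?n. \<forall>s. 1 \<le> s \<and> s \<le> r \<longrightarrow> (\<forall>j K. j < ?n \<longrightarrow> K \<in> LS ?n s \<longrightarrow> rotsum ?a i j K = 0)"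
  proof (intro allI impI)
    fix i s j K assume i: "i < ?n" and s: "1 \<le> s \<and> s \<le> r" and j: "j < ?n" and K: "K \<in> LS ?n s"
    show "rotsum ?a i j K = 0"
    proof (cases "s = 1")
      case True
      then obtain k where k: "K = [k]" using K by (auto simp: LS_def length_Suc_conv)
      then show ?thesis by (simp add: rotsum_s1 Ginv_app)
    next
      case False
      then have s2: "2 \<le> s" "s \<le> r" using s by auto
      have "rotsum ?a i j K = rotsum (\<lambda>x. Phi (s, x)) i j K"
      proof (rule rotsum_eq_on)
        fix h t assume h: "h \<in> set (j # K)" and t: "set t \<subseteq> set (j # K)" and lt: "length t = length K"
        have "set (j # K) \<subseteq> {..<?n}" using j K by (auto simp: LS_def)
        then have "(i, h, t) \<in> jet_index ?n r" using i h t lt K s by (auto simp: jet_index_def LS_def)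
        moreover have "length t = s" using lt K by (simp add: LS_def)
        ultimately show "?a (i, h, t) = Phi (s, i, h, t)" using s2 by (simp add: Ginv_app)
      qed
      also have "\<dots> = 0" using NkD_rot[OF pNk[OF P s2]] K by (simp add: LS_def)
      finally show ?thesis .
    qed
  qed
  have gauss: "\<forall>i<?n. \<forall>z :: nat \<Rightarrow> real. (\<Sum>j<?n. taylor ?n r ?a i j z * z j) = (\<Sum>j<?n. ?a (i, j, []) * z j)"
    by (rule gauss_char[where a = ?a and n = ?n and r = r, THEN iffD2], rule msym, assumption, rule rot)
  show ?thesis
    unfolding gauss_jets_def metric_jets_def mem_Collect_eq
  proof (intro conjI)
    show "\<forall>x. x \<notin> jet_index (p + q) r \<longrightarrow> ?a x = 0" using zero by blast
    show "\<forall>i j K. ?a (i, j, K) = ?a (j, i, K)" using sym by blast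
    show "\<forall>i j K K'. mset K = mset K' \<longrightarrow> ?a (i, j, K) = ?a (i, j, K')" using msym by blast
    show "has_signature p q (\<lambda>i j. ?a (i, j, []))" by (rule sig)
    show "\<forall>i<p + q. \<forall>z. (\<Sum>j<p + q. taylor (p + q) r ?a i j z * z j) = (\<Sum>j<p + q. ?a (i, j, []) * z j)"
      by (rule gauss)
  qed
qed

lemma Ginv_f:
  assumes a: "a \<in> gauss_jets p q r"
  shows "Ginv (p+q) r (normal_map r a) = a"
proof
  fix x :: "nat \<times> nat \<times> nat list"
  obtain i j K where x: "x = (i, j, K)" using prod_cases3 by blast
  show "Ginv (p+q) r (normal_map r a) x = a x"
  proof (cases "(i, j, K) \<in> jet_index (p+q) r")
    case True
    show ?thesis
    proof (cases "length K = 1")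
      case True
      then obtain k where "K = [k]" by (auto simp: length_Suc_conv)
      then show ?thesis unfolding x using gj_first[OF a] by (simp add: Ginv_app)
    next
      case False
      have lr: "length K \<le> r" using \<open>(i, j, K) \<in> jet_index (p+q) r\<close> by (simp add: jet_index_def)
      have "length K = 0 \<or> (2 \<le> length K \<and> length K \<le> r)" using False lr by presburger
      then show ?thesis unfolding x using True False by (auto simp: Ginv_app normal_map_app)
    qed
  next
    case False
    then show ?thesis unfolding x using gj_zero[OF a] by (simp add: Ginv_app)
  qed
qed

lemma prodN_coord: "prodN p q r \<subseteq> coord_space (prod_index (p+q) r)"
  unfolding coord_space_def
proof (safe)
  fix Phi y assume P: "Phi \<in> prodN p q r" and y: "y \<notin> prod_index (p+q) r"
  obtain s i j K where yy: "y = (s, i, j, K)" using prod_cases4 by blast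
  show "Phi y = 0" using prodN_zero[OF P] y unfolding yy by simp
qed

lemma gauss_coord: "gauss_jets p q r \<subseteq> coord_space (jet_index (p+q) r)"
  unfolding coord_space_def using gj_zero by blast

theorem mainTheorem4:
  fixes p q r :: nat
  shows "diffeo (jet_index (p+q) r) (prod_index (p+q) r) (normal_map r)
                (gauss_jets p q r) (prodN p q r)"
proof -
  let ?S = "gauss_jets p q r" and ?T = "prodN p q r" and ?f = "normal_map r" and ?g = "Ginv (p+q) r"
  have bij: "bij_betw ?f ?S ?T"
  proof (rule bij_betw_byWitness[where f' = ?g])
    show "\<forall>a\<in>?S. ?g (?f a) = a" using Ginv_f by blast
    show "\<forall>a'\<in>?T. ?f (?g a') = a'" using f_Ginv by blast
    show "?f ` ?S \<subseteq> ?T" using f_into by blast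
    show "?g ` ?T \<subseteq> ?S" using Ginv_into by blast
  qed
  have inv: "\<forall>y\<in>?T. ?g y = inv_into ?S ?f y"
  proof
    fix y assume y: "y \<in> ?T"
    show "?g y = inv_into ?S ?f y"
      using bij_betw_imp_inj_on[OF bij] Ginv_into[OF y] f_Ginv[OF y] by (metis inv_into_f_eq)
  qed
  have sm1: "smooth_map (jet_index (p+q) r) (coord_space (jet_index (p+q) r)) ?f"
  proof (rule smooth_map_coordwise)
    fix b :: "nat \<times> nat \<times> nat \<times> nat list"
    obtain s i j K where b: "b = (s, i, j, K)" using prod_cases4 by blast
    show "(\<exists>c. (\<lambda>x. ?f x b) = (\<lambda>x. x c)) \<or> (\<lambda>x. ?f x b) = (\<lambda>x. 0)"
    proof (cases "(s = 0 \<or> (2 \<le> s \<and> s \<le> r)) \<and> length K = s")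
      case True
      then have "(\<lambda>x. ?f x b) = (\<lambda>x. x (i, j, K))" unfolding b by (simp add: normal_map_app)
      then show ?thesis by blast
    next
      case False
      then have "(\<lambda>x. ?f x b) = (\<lambda>x. 0)" unfolding b normal_map_app by (simp only: if_not_P[OF False] if_False)
      then show ?thesis by blast
    qed
  qed
  have sm2: "smooth_map (prod_index (p+q) r) (coord_space (prod_index (p+q) r)) ?g"
  proof (rule smooth_map_coordwise)
    fix b :: "nat \<times> nat \<times> nat list"
    obtain i j K where b: "b = (i, j, K)" using prod_cases3 by blast
    show "(\<exists>c. (\<lambda>x. ?g x b) = (\<lambda>x. x c)) \<or> (\<lambda>x. ?g x b) = (\<lambda>x. 0)"
    proof (cases "(i, j, K) \<in> jet_index (p+q) r \<and> length K \<noteq> 1")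
      case True
      then have "(\<lambda>x. ?g x b) = (\<lambda>x. x (length K, i, j, K))" unfolding b by (simp add: Ginv_app)
      then show ?thesis by blast
    next
      case False
      then have "(\<lambda>x. ?g x b) = (\<lambda>x. 0)" unfolding b Ginv_app by (simp only: if_not_P[OF False] if_False)
      then show ?thesis by blast
    qed
  qed
  show ?thesis
    unfolding diffeo_def
  proof (intro conjI)
    show "finite (jet_index (p+q) r)" by (rule finite_jet_index)
    show "finite (prod_index (p+q) r)" by (rule finite_prod_index)
    show "?S \<subseteq> coord_space (jet_index (p+q) r)" by (rule gauss_coord)
    show "?T \<subseteq> coord_space (prod_index (p+q) r)" by (rule prodN_coord)
    show "bij_betw ?f ?S ?T" by (rule bij)
    show "\<exists>U F. openin (top_of_set (coord_space (jet_index (p+q) r))) U \<and> ?S \<subseteq> U \<and>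
            smooth_map (jet_index (p+q) r) U F \<and> (\<forall>x\<in>?S. F x = ?f x)"
      by (intro exI[of _ "coord_space (jet_index (p+q) r)"] exI[of _ ?f] conjI openin_subtopology_self gauss_coord sm1 ballI refl)
    show "\<exists>W G. openin (top_of_set (coord_space (prod_index (p+q) r))) W \<and> ?T \<subseteq> W \<and>
            smooth_map (prod_index (p+q) r) W G \<and> (\<forall>y\<in>?T. G y = inv_into ?S ?f y)"
      by (intro exI[of _ "coord_space (prod_index (p+q) r)"] exI[of _ ?g] conjI openin_subtopology_self prodN_coord sm2 inv)
  qed
qed

end
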